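(* Let $T=(T_{r,k})_{r,k\ge 0}$ be a number triangle with arithmetic sequences on all major and minor diagonals, i.e. there are integers $c_r$ ($r\ge 0$) and $b_k$ ($k\ge 0$) such that $T_{r,k}=T_{r,0}+kc_r$ and $T_{r,k}=T_{0,k}+rb_k$ for all $r,k\ge 0$. Then there exists $d\in\mathbb{Z}$ such that $d=c_r-c_{r-1}=b_k-b_{k-1}$ for all $r,k\ge 1$.
   Context: A number triangle is an array of integers $T_{r,k}$ indexed by integers $r,k\ge 0$, arranged so that row $n$ consists of entries with $r+k=n$. The $r$-th major diagonal is the sequence $(T_{r,k})_{k\ge 0}$ and the $k$-th minor diagonal is the sequence $(T_{r,k})_{r\ge 0}$. *)

theory Defs
  imports Main
begin

end

theory Submission
  imports Defs
begin

theorem mainTheorem5: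
  fixes T :: "nat \<Rightarrow> nat \<Rightarrow> int" and c b :: "nat \<Rightarrow> int"
  assumes major: "\<And>r k. T r k = T r 0 + int k * c r"
    and minor: "\<And>r k. T r k = T 0 k + int r * b k"
  shows "\<exists>d::int. \<forall>r k. r \<ge> 1 \<longrightarrow> k \<ge> 1 \<longrightarrow>
           d = c r - c (r - 1) \<and> d = b k - b (k - 1)"
proof -
  have key: "int r * b 0 + int k * c r = int k * c 0 + int r * b k" for r k
  proof -
    have "T r k = T r 0 + int k * c r" by (rule major)
    moreover have "T r k = T 0 k + int r * b k" by (rule minor)
    moreover have "T r 0 = T 0 0 + int r * b 0" using minor[of r 0] by simp
    moreover have "T 0 k = T 0 0 + int k * c 0" using major[of 0 k] by simp
    ultimately show ?thesis by linarith
  qed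
  have hc: "c r = c 0 + int r * (c 1 - c 0)" for r
  proof -
    have "int r * b 0 + c r = c 0 + int r * b 1" using key[of r 1] by simp
    moreover have "b 0 + c 1 = c 0 + b 1" using key[of 1 1] by simp
    moreover have "int r * (b 1 - b 0) = int r * (c 1 - c 0)"
      using calculation(2) by (metis add.commute diff_add_eq diff_diff_eq2 eq_diff_eq)
    ultimately show ?thesis by (simp add: algebra_simps)
  qed
  have hb: "b k = b 0 + int k * (c 1 - c 0)" for k
    using key[of 1 k] by (simp add: algebra_simps)
  show ?thesis
  proof (intro exI allI impI conjI)
    fix r k :: nat assume r: "r \<ge> 1" and k: "k \<ge> 1"
    show "c 1 - c 0 = c r - c (r - 1)"
      using hc[of r] hc[of "r-1"] r by (simp add: of_nat_diff algebra_simps)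
    show "c 1 - c 0 = b k - b (k - 1)"
      using hb[of k] hb[of "k-1"] k by (simp add: of_nat_diff algebra_simps)
  qed
qed

end
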